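(* Let $k$ be a positive integer. For any odd prime $p>k$, the rational number $P_k(1,4,0)$ satisfies $P_k(1,4,0)\not\equiv0\pmod p$ (i.e. it is a $p$-adic unit).
   Context: Define $\widetilde c_n\in\mathbb Q[\beta]$ by $\widetilde c_0=2$, $\widetilde c_1=1$, $(n+1)\widetilde c_{n+1}=\widetilde c_n+\frac\beta4(n-1)\widetilde c_{n-1}$ for $n\ge1$, and $\widetilde c_n=0$ for $n<0$. Then $P_k(1,\beta,0)$ is the $k\times k$ determinant with $(j,l)$ entry $\widetilde c_{k-2(j-1)+(l-1)}$, $1\le j,l\le k$. (These $\widetilde c_n$ are the specializations $h=1,\gamma=0$ of polynomials $c_n(h,\beta,\gamma)$ with $c_0=2$ and $\log(1+\sum_{n\ge1}c_nt^n)=\sum_{m\ge1}(-1)^{m-1}(m-1)!\mathrm{ch}_mt^m$, $\mathrm{ch}_1=h$, $\mathrm{ch}_{2n}=0$, $\mathrm{ch}_{2n-1}=\frac1{(2n-1)!}(\frac{\beta h}4-\frac{n-1}2\gamma)(\frac\beta4)^{n-2}$ for $n\ge2$, and $P_k(h,\beta,\gamma)=\det(c_{k-2(j-1)+(l-1)})$.) *)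

theory Defs
  imports "Jordan_Normal_Form.Determinant" "HOL-Computational_Algebra.Primes"
begin

fun ctil :: "rat \<Rightarrow> nat \<Rightarrow> rat" where
  "ctil \<beta> 0 = 2"
| "ctil \<beta> (Suc 0) = 1"
| "ctil \<beta> (Suc (Suc n)) =
     (ctil \<beta> (Suc n) + \<beta> / 4 * of_nat n * ctil \<beta> n) / of_nat (n + 2)"

definition ctilZ :: "rat \<Rightarrow> int \<Rightarrow> rat" where
  "ctilZ \<beta> i = (if i < 0 then 0 else ctil \<beta> (nat i))"

text \<open>P_k(1,beta,0): k x k determinant with (j,l) entry c_(k-2(j-1)+(l-1)), 1 <= j,l <= k;
  here with 0-based indices i = j-1, m = l-1.\<close>
definition Pk :: "nat \<Rightarrow> rat \<Rightarrow> rat" where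
  "Pk k \<beta> = det (mat k k (\<lambda>(i, m). ctilZ \<beta> (int k - 2 * int i + int m)))"

definition padic_unit :: "nat \<Rightarrow> rat \<Rightarrow> bool" where
  "padic_unit p r = (\<not> int p dvd fst (quotient_of r) \<and> \<not> int p dvd snd (quotient_of r))"

end

theory Submission
  imports Defs "HOL-Computational_Algebra.Formal_Power_Series"
begin

no_notation vec_index (infixl "$" 100)
notation fps_nth (infixl "$" 75)


definition FF :: "rat fps" where
  "FF = Abs_fps (\<lambda>n. if n = 0 then 1 else ctil 4 n)"

lemma FF_0[simp]: "FF $ 0 = 1" and FF_1[simp]: "FF $ Suc 0 = 1"
  by (simp_all add: FF_def)

lemma FF_rec: "of_nat (n+2) * FF $ (n+2) = FF $ (n+1) + of_nat n * FF $ n"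
proof -
  have a: "of_nat n * FF$n = of_nat n * ctil 4 n" by (cases n) (simp_all add: FF_def)
  have b: "FF $ (n+2) = (ctil 4 (Suc n) + of_nat n * ctil 4 n) / of_nat (n+2)"
    by (simp add: FF_def)
  have c: "FF $ (n+1) = ctil 4 (Suc n)" by (simp add: FF_def)
  have d: "(of_nat (n+2)::rat) \<noteq> 0" by simp
  show ?thesis unfolding a b c using d by simp
qed

lemma X2_mult_nth: "(fps_X^2 * f) $ n = (if n < 2 then 0 else f $ (n - 2))"
  by (simp add: fps_X_power_mult_nth)

lemma X2_mult_nth': "((f::rat fps) * fps_X^2) $ n = (if n < 2 then 0 else f $ (n - 2))"
  by (simp add: mult.commute[of f] X2_mult_nth)

lemma FF_ode: "(1 - fps_X^2) * fps_deriv FF = FF"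
proof (rule fps_ext)
  fix m
  show "((1 - fps_X^2) * fps_deriv FF) $ m = FF $ m"
  proof (cases "m < 2")
    case True
    then have "m = 0 \<or> m = 1" by auto
    then show ?thesis
    proof
      assume "m = 0" then show ?thesis by (simp add: algebra_simps X2_mult_nth)
    next
      assume m: "m = 1"
      have "FF $ Suc (Suc 0) = 1/2" using FF_rec[of 0] by (simp add: numeral_2_eq_2)
      then show ?thesis using m by (simp add: algebra_simps X2_mult_nth)
    qed
  next
    case False
    define j where "j = m - 2"
    have j: "m = Suc (Suc j)" using False unfolding j_def by simp
    have h: "of_nat (Suc (Suc (Suc j))) * FF $ Suc (Suc (Suc j)) = FF $ Suc (Suc j) + of_nat (Suc j) * FF $ Suc j"
      using FF_rec[of "Suc j"] by (simp add: algebra_simps)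
    have "((1 - fps_X^2) * fps_deriv FF) $ m = fps_deriv FF $ Suc (Suc j) - fps_deriv FF $ j"
      using j by (simp add: ring_distribs X2_mult_nth)
    also have "\<dots> = FF $ m" using h j by (simp add: algebra_simps)
    finally show ?thesis .
  qed
qed

lemma FF_sq: "(1 - fps_X) * FF^2 = 1 + fps_X"
proof -
  define u where "u = (1 - fps_X) * FF^2 - (1 + fps_X)"
  have d: "fps_deriv u = - (FF^2) + 2 * (1 - fps_X) * FF * fps_deriv FF - 1"
    unfolding u_def power2_eq_square by (simp add: algebra_simps)
  have e: "(1 + fps_X) * (1 - fps_X) = (1 - fps_X^2 :: rat fps)"
    by (simp add: algebra_simps power2_eq_square)
  have "(1 + fps_X) * fps_deriv u
      = - (1 + fps_X) * FF^2 + 2 * FF * (((1 + fps_X) * (1 - fps_X)) * fps_deriv FF) - (1 + fps_X)"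
    unfolding d by (simp add: algebra_simps)
  also have "\<dots> = - (1 + fps_X) * FF^2 + 2 * FF * FF - (1 + fps_X)"
    unfolding e FF_ode ..
  also have "\<dots> = u" unfolding u_def by (simp add: algebra_simps power2_eq_square)
  finally have D: "(1 + fps_X) * fps_deriv u = u" .
  have rec: "of_nat (Suc n) * u $ Suc n + of_nat n * u $ n = u $ n" for n
  proof -
    have "((1 + fps_X) * fps_deriv u) $ n = u $ n" using D by simp
    then show ?thesis by (cases n) (simp_all add: algebra_simps)
  qed
  have "u $ n = 0" for n
  proof (induction n)
    case 0
    then show ?case by (simp add: u_def power2_eq_square)
  next
    case (Suc n)
    then show ?case using rec[of n] by simp
  qed
  then have "u = 0" by (simp add: fps_ext)
  then show ?thesis unfolding u_def by simp
qed


definition hf :: "rat fps" where "hf = fps_const (1/2)"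
definition sg :: "rat fps" where "sg = (1 - fps_X) * FF"
definition rr :: "rat fps" where "rr = hf * (1 - sg)"

lemma hf2: "2 * hf = 1"
  by (simp add: hf_def numeral_fps_const)

lemma gen_rr2:
  fixes h s x :: "'a::comm_ring_1"
  assumes h: "2*h = 1" and s: "s*s = 1 - x*x"
  shows "h*(1-s)*(h*(1-s)) = h*(1-s) - h*h*x*x"
proof -
  have "h*(1-s)*(h*(1-s)) = h*h*(1 - 2*s) + h*h*(s*s)" by (simp add: algebra_simps)
  also have "\<dots> = h*h*(1 - 2*s) + h*h*(1 - x*x)" unfolding s ..
  also have "\<dots> = (2*h)*h*(1-s) - h*h*x*x" by (simp add: algebra_simps)
  finally show ?thesis unfolding h by simp
qed

lemma gen_D1:
  fixes h s F x :: "'a::comm_ring_1"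
  assumes h: "2*h = 1" and s: "s = (1-x)*F" and sF: "s*F = 1+x"
  shows "(1 - h*x)*F - (1 + h*x) = h*(1-s)*(F-1)"
proof -
  have "h*(1-s)*(F-1) = h*(F - 1) - h*(s*F) + h*s" by (simp add: algebra_simps)
  also have "\<dots> = h*(F-1) - h*(1+x) + h*((1-x)*F)" unfolding sF by (simp add: s)
  also have "\<dots> = (2*h)*F - h*x*F - (2*h) - h*x" by (simp add: algebra_simps)
  finally show ?thesis unfolding h by (simp add: algebra_simps)
qed

lemma sgFF: "sg * FF = 1 + fps_X"
  using FF_sq unfolding sg_def by (simp add: power2_eq_square algebra_simps)

lemma sg2: "sg * sg = 1 - fps_X * fps_X"
proof -
  have "sg * sg = (1 - fps_X) * (sg * FF)" unfolding sg_def by (simp add: algebra_simps)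
  then show ?thesis unfolding sgFF by (simp add: algebra_simps)
qed

lemma rr2: "rr * rr = rr - hf * hf * fps_X * fps_X"
  unfolding rr_def by (rule gen_rr2[OF hf2 sg2])

fun w :: "nat \<Rightarrow> rat fps" where
  "w 0 = 1"
| "w (Suc 0) = 1 - hf * fps_X"
| "w (Suc (Suc k)) = w (Suc k) - hf * hf * fps_X * fps_X * w k"

fun wt :: "nat \<Rightarrow> rat fps" where
  "wt 0 = 1"
| "wt (Suc 0) = 1 + hf * fps_X"
| "wt (Suc (Suc k)) = wt (Suc k) - hf * hf * fps_X * fps_X * wt k"

lemma Dk: "w k * FF - wt k = rr^k * (FF - 1)"
proof (induction k rule: w.induct)
  case 1
  then show ?case by simp
next
  case 2
  show ?case using gen_D1[OF hf2 sg_def sgFF] unfolding rr_def by simp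
next
  case (3 k)
  have "w (Suc (Suc k)) * FF - wt (Suc (Suc k)) = (w (Suc k) * FF - wt (Suc k)) - hf * hf * fps_X * fps_X * (w k * FF - wt k)"
    by (simp add: algebra_simps)
  also have "\<dots> = rr^k * (FF - 1) * (rr - hf * hf * fps_X * fps_X)"
    unfolding 3 by (simp add: algebra_simps)
  also have "\<dots> = rr^(Suc (Suc k)) * (FF - 1)" unfolding rr2[symmetric] by (simp add: algebra_simps)
  finally show ?case .
qed


lemma vanish_mult:
  assumes "\<And>i. i < a \<Longrightarrow> f $ i = 0" and "\<And>i. i < b \<Longrightarrow> g $ i = 0" and "n < a + b"
  shows "((f::rat fps) * g) $ n = 0"
  unfolding fps_mult_nth
proof (rule sum.neutral, rule ballI)
  fix i assume "i \<in> {0..n}"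
  show "f $ i * g $ (n - i) = 0"
  proof (cases "i < a")
    case True then show ?thesis using assms(1) by simp
  next
    case False then have "n - i < b" using assms(3) \<open>i \<in> {0..n}\<close> by auto
    then show ?thesis using assms(2) by simp
  qed
qed

lemma rr_0: "rr $ 0 = 0" and rr_1: "rr $ Suc 0 = 0"
  by (simp_all add: rr_def hf_def sg_def algebra_simps)

lemma rr_pow_vanish: "i < 2*k \<Longrightarrow> (rr^k) $ i = 0"
proof (induction k arbitrary: i)
  case 0 then show ?case by simp
next
  case (Suc k)
  have "(rr * rr^k) $ i = 0"
  proof (rule vanish_mult[of 2 _ "2*k"])
    fix j assume "j < (2::nat)" then have "j = 0 \<or> j = Suc 0" by auto
    then show "rr $ j = 0" using rr_0 rr_1 by auto
  next
    fix j assume "j < 2*k" then show "(rr^k) $ j = 0" using Suc.IH by simp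
  next
    show "i < 2 + 2*k" using Suc.prems by simp
  qed
  then show ?case by simp
qed

lemma wF_nth: "n \<le> 2*k \<Longrightarrow> (w k * FF) $ n = wt k $ n"
proof -
  assume n: "n \<le> 2*k"
  have "(rr^k * (FF - 1)) $ n = 0"
  proof (rule vanish_mult[of "2*k" _ 1])
    fix j assume "j < 2*k" then show "(rr^k) $ j = 0" by (rule rr_pow_vanish)
  next
    fix j assume "j < (1::nat)" then show "(FF - 1) $ j = 0" by simp
  next
    show "n < 2*k + 1" using n by simp
  qed
  then have "(w k * FF - wt k) $ n = 0" unfolding Dk .
  then show ?thesis by simp
qed

lemma shift_nth: "(hf*hf*fps_X*fps_X*a) $ n = (if n < 2 then 0 else a $ (n-2) / 4)"
proof -
  have e: "hf*hf*fps_X*fps_X*a = fps_const (1/4) * (fps_X * (fps_X * a))"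
    by (simp add: hf_def mult.assoc)
  show ?thesis unfolding e by (simp add: numeral_2_eq_2)
qed

lemma w_nth_SS: "w (Suc (Suc k)) $ n = w (Suc k) $ n - (if n < 2 then 0 else w k $ (n-2) / 4)"
  by (simp add: shift_nth)
lemma wt_nth_SS: "wt (Suc (Suc k)) $ n = wt (Suc k) $ n - (if n < 2 then 0 else wt k $ (n-2) / 4)"
  by (simp add: shift_nth)

lemma wt_w: "wt k $ n = (-1)^n * w k $ n"
proof (induction k arbitrary: n rule: w.induct)
  case 1 then show ?case by simp
next
  case 2 then show ?case by (auto simp: hf_def le_Suc_eq)
next
  case (3 k)
  have "(-1::rat)^n = (-1)^(n-2)" if "\<not> n < 2"
  proof -
    have "n = (n-2) + 2" using that by simp
    then have "(-1::rat)^n = (-1)^(n-2) * (-1)^2" by (metis power_add)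
    then show ?thesis by simp
  qed
  then show ?case unfolding w_nth_SS wt_nth_SS using 3 by (auto simp: algebra_simps)
qed

lemma w_high: "k < n \<Longrightarrow> w k $ n = 0"
proof (induction k arbitrary: n rule: w.induct)
  case 1 then show ?case by simp
next
  case 2 then show ?case by (simp add: hf_def)
next
  case (3 k)
  then show ?case unfolding w_nth_SS by auto
qed

lemma w_0: "w k $ 0 = 1"
  by (induction k rule: w.induct) (simp_all add: w_nth_SS hf_def)

lemma w_top: "w k $ k = 1/2^k \<or> w k $ k = -(1/2^k)"
proof (induction k rule: w.induct)
  case 1 then show ?case by simp
next
  case 2 then show ?case by (simp add: hf_def)
next
  case (3 k)
  have "w (Suc (Suc k)) $ Suc (Suc k) = - (w k $ k / 4)" unfolding w_nth_SS by (simp add: w_high)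
  then show ?case using 3 by auto
qed

definition CC :: "rat fps" where "CC = Abs_fps (ctil 4)"

lemma CC_FF: "CC = FF + 1"
  by (rule fps_ext) (simp add: CC_def FF_def)

lemma kernel: "odd e \<Longrightarrow> e \<le> 2*k \<Longrightarrow> (w k * CC) $ e = 0"
proof -
  assume e: "odd e" "e \<le> 2*k"
  have "(w k * CC)$e = (w k * FF)$e + w k $ e" by (simp add: CC_FF ring_distribs)
  also have "\<dots> = 0" using wF_nth[OF e(2)] wt_w[of k e] e(1) by simp
  finally show ?thesis .
qed


lemma sum_key:
  assumes i: "i < Suc n"
  shows "(\<Sum>j<Suc n. ctilZ 4 (int n - 2*int i + int j) * w (Suc n) $ (Suc n - j)) = - ctil 4 (2*n+1-2*i)"
proof -
  define K where "K = Suc n"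
  define e where "e = 2*n+1-2*i"
  have e_odd: "odd e" and e_le: "e \<le> 2*K" and e_pos: "1 \<le> e" using i unfolding e_def K_def by auto
  have inte: "int e = 2*int n + 1 - 2*int i" using i unfolding e_def by auto
  have s1: "(\<Sum>j<K. ctilZ 4 (int n - 2*int i + int j) * w K $ (K - j))
      = (\<Sum>t\<in>{1..K}. w K $ t * ctilZ 4 (int e - int t))"
  proof (rule sum.reindex_bij_witness[where i="\<lambda>t. K - t" and j="\<lambda>j. K - j"])
    fix t assume "t \<in> {1..K}" then show "K - (K - t) = t" "K - t \<in> {..<K}" by auto
  next
    fix j assume "j \<in> {..<K}" then show "K - (K - j) = j" "K - j \<in> {1..K}" by auto
  next
    fix j assume j: "j \<in> {..<K}"
    have "int e - int (K - j) = int n - 2*int i + int j" using j inte unfolding K_def by auto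
    then show "w K $ (K - j) * ctilZ 4 (int e - int (K - j)) = ctilZ 4 (int n - 2*int i + int j) * w K $ (K - j)"
      by simp
  qed
  have s2: "(\<Sum>t\<in>{1..K}. w K $ t * ctilZ 4 (int e - int t)) = (\<Sum>t\<in>{1..K+e}. w K $ t * ctilZ 4 (int e - int t))"
    by (rule sum.mono_neutral_left) (auto simp: w_high)
  have s3: "(\<Sum>t\<in>{1..e}. w K $ t * ctil 4 (e - t)) = (\<Sum>t\<in>{1..K+e}. w K $ t * ctilZ 4 (int e - int t))"
  proof -
    have "(\<Sum>t\<in>{1..e}. w K $ t * ctil 4 (e - t)) = (\<Sum>t\<in>{1..e}. w K $ t * ctilZ 4 (int e - int t))"
      by (rule sum.cong) (auto simp: ctilZ_def nat_diff_distrib)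
    also have "\<dots> = (\<Sum>t\<in>{1..K+e}. w K $ t * ctilZ 4 (int e - int t))"
      by (rule sum.mono_neutral_left) (auto simp: ctilZ_def)
    finally show ?thesis .
  qed
  have "0 = (w K * CC) $ e" using kernel[OF e_odd e_le] by simp
  also have "\<dots> = (\<Sum>t=0..e. w K $ t * ctil 4 (e - t))" by (simp add: fps_mult_nth CC_def)
  also have "\<dots> = w K $ 0 * ctil 4 e + (\<Sum>t\<in>{1..e}. w K $ t * ctil 4 (e - t))"
    by (subst sum.atLeast_Suc_atMost) auto
  finally have "(\<Sum>t\<in>{1..e}. w K $ t * ctil 4 (e - t)) = - ctil 4 e" by (simp add: w_0)
  then show ?thesis using s1 s2 s3 unfolding K_def e_def by simp
qed


definition AM :: "nat \<Rightarrow> rat mat" where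
  "AM k = mat k k (\<lambda>(i, m). ctilZ 4 (int k - 2 * int i + int m))"

definition MP :: "nat \<Rightarrow> rat mat" where
  "MP n = mat (Suc n) (Suc n) (\<lambda>(i, m). ctilZ 4 (int n - 2 * int i + int m))"

definition TM :: "nat \<Rightarrow> rat mat" where
  "TM n = mat (Suc n) (Suc n) (\<lambda>(i, m). if m < n then (if i = Suc m then 1 else 0) else - (w (Suc n) $ (Suc n - i)))"

lemma AM_factor: "AM (Suc n) = MP n * TM n"
proof (rule eq_matI)
  fix i m assume "i < dim_row (MP n * TM n)" "m < dim_col (MP n * TM n)"
  then have i: "i < Suc n" and m: "m < Suc n" by (auto simp: MP_def TM_def)
  have prod: "(MP n * TM n) $$ (i, m) = (\<Sum>j<Suc n. ctilZ 4 (int n - 2*int i + int j) * TM n $$ (j, m))"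
    using i m by (simp add: MP_def TM_def scalar_prod_def lessThan_atLeast0)
  show "AM (Suc n) $$ (i, m) = (MP n * TM n) $$ (i, m)"
  proof (cases "m < n")
    case True
    have "(\<Sum>j<Suc n. ctilZ 4 (int n - 2*int i + int j) * TM n $$ (j, m))
        = (\<Sum>j<Suc n. if j = Suc m then ctilZ 4 (int n - 2*int i + int j) else 0)"
      by (rule sum.cong) (use True m in \<open>auto simp: TM_def\<close>)
    also have "\<dots> = ctilZ 4 (int n - 2*int i + int (Suc m))" using True by simp
    finally show ?thesis unfolding prod using i m by (simp add: AM_def algebra_simps)
  next
    case False
    then have mn: "m = n" using m by simp
    have "(\<Sum>j<Suc n. ctilZ 4 (int n - 2*int i + int j) * TM n $$ (j, m))
        = - (\<Sum>j<Suc n. ctilZ 4 (int n - 2*int i + int j) * w (Suc n) $ (Suc n - j))"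
      unfolding sum_negf[symmetric] by (rule sum.cong) (use mn in \<open>auto simp: TM_def\<close>)
    also have "\<dots> = ctil 4 (2*n+1-2*i)" using sum_key[OF i] by simp
    also have "\<dots> = ctilZ 4 (int (Suc n) - 2*int i + int m)"
    proof -
      have "int (Suc n) - 2*int i + int m = int (2*n+1-2*i)" using i mn by auto
      then show ?thesis by (simp add: ctilZ_def)
    qed
    finally show ?thesis unfolding prod using i m by (simp add: AM_def)
  qed
next
  show "dim_row (AM (Suc n)) = dim_row (MP n * TM n)" by (simp add: AM_def MP_def)
  show "dim_col (AM (Suc n)) = dim_col (MP n * TM n)" by (simp add: AM_def TM_def)
qed


lemma det_MP: "det (MP n) = 2 * det (AM n)"
proof -
  have C: "MP n \<in> carrier_mat (Suc n) (Suc n)" by (simp add: MP_def)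
  have "det (MP n) = (\<Sum>j<Suc n. MP n $$ (n, j) * cofactor (MP n) n j)"
    by (rule laplace_expansion_row[OF C]) simp
  also have "\<dots> = MP n $$ (n, n) * cofactor (MP n) n n"
  proof -
    have "(\<Sum>j<n. MP n $$ (n, j) * cofactor (MP n) n j) = 0"
      by (rule sum.neutral) (auto simp: MP_def ctilZ_def)
    then show ?thesis by simp
  qed
  also have "MP n $$ (n, n) = 2" by (simp add: MP_def ctilZ_def)
  also have "mat_delete (MP n) n n = AM n"
    by (rule eq_matI) (auto simp: mat_delete_def MP_def AM_def)
  then have "cofactor (MP n) n n = det (AM n)" unfolding cofactor_def by simp
  finally show ?thesis .
qed

lemma det_TM: "det (TM n) = - (w (Suc n) $ Suc n) * (-1)^n"
proof -
  have C: "TM n \<in> carrier_mat (Suc n) (Suc n)" by (simp add: TM_def)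
  have "det (TM n) = (\<Sum>j<Suc n. TM n $$ (0, j) * cofactor (TM n) 0 j)"
    by (rule laplace_expansion_row[OF C]) simp
  also have "\<dots> = TM n $$ (0, n) * cofactor (TM n) 0 n"
  proof -
    have "(\<Sum>j<n. TM n $$ (0, j) * cofactor (TM n) 0 j) = 0"
      by (rule sum.neutral) (auto simp: TM_def)
    then show ?thesis by simp
  qed
  also have "TM n $$ (0, n) = - (w (Suc n) $ Suc n)" by (simp add: TM_def)
  also have "mat_delete (TM n) 0 n = 1\<^sub>m n"
    by (rule eq_matI) (auto simp: mat_delete_def TM_def)
  then have "cofactor (TM n) 0 n = (-1)^n" unfolding cofactor_def by simp
  finally show ?thesis .
qed

lemma det_AM_Suc: "det (AM (Suc n)) = 2 * det (AM n) * (- (w (Suc n) $ Suc n) * (-1)^n)"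
proof -
  have "det (AM (Suc n)) = det (MP n) * det (TM n)"
    unfolding AM_factor by (rule det_mult) (auto simp: MP_def TM_def)
  then show ?thesis by (simp add: det_MP det_TM)
qed

lemma det_AM: "\<exists>e::nat. det (AM k) = 1/2^e \<or> det (AM k) = -(1/2^e)"
proof (induction k)
  case 0
  have "det (AM 0) = 1" by (rule det_dim_zero) (simp add: AM_def)
  then show ?case by (intro exI[of _ 0]) simp
next
  case (Suc n)
  then obtain e where e: "det (AM n) = 1/2^e \<or> det (AM n) = -(1/2^e)" by blast
  have t: "w (Suc n) $ Suc n = 1/2^(Suc n) \<or> w (Suc n) $ Suc n = -(1/2^(Suc n))" by (rule w_top)
  have s: "(-1::rat)^n = 1 \<or> (-1::rat)^n = -1" by (cases "even n") auto
  have "2 * (1/2^e) * (1/2^Suc n) = (1/2^(e+n) :: rat)" by (simp add: power_add)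
  then show ?case unfolding det_AM_Suc using e t s
    by (intro exI[of _ "e+n"]) (auto simp: algebra_simps)
qed


lemma unit_of_pow2:
  fixes p :: nat and r :: rat
  assumes p: "prime p" "odd p" and r: "r = 1/2^e \<or> r = -(1/2^e)"
  shows "padic_unit p r"
proof -
  obtain a b where q: "quotient_of r = (a, b)" by (cases "quotient_of r")
  have rb: "r = of_int a / of_int b" using quotient_of_div[OF q] .
  have bpos: "b > 0" using quotient_of_denom_pos[OF q] .
  have cop: "coprime a b" using quotient_of_coprime[OF q] .
  have "(of_int a * 2^e :: rat) = of_int b \<or> (of_int a * 2^e :: rat) = - (of_int b :: rat)"
    using r bpos unfolding rb by (auto simp: field_simps)
  then have "rat_of_int (a * 2^e) = rat_of_int b \<or> rat_of_int (a * 2^e) = rat_of_int (- b)" by simp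
  then have ab: "a * 2^e = b \<or> a * 2^e = - b" by (simp only: of_int_eq_iff)
  have "a dvd b" using ab
  proof
    assume "a * 2^e = b" then show ?thesis by (metis dvd_triv_left)
  next
    assume "a * 2^e = - b" then have "b = - (a * 2^e)" by simp
    then show ?thesis by simp
  qed
  then have "is_unit a" by (rule coprime_common_divisor[OF cop dvd_refl])
  then have a1: "a = 1 \<or> a = -1" by auto
  have pe: "(0::int) < 2^e" by simp
  have b2: "b = 2^e" using a1
  proof
    assume "a = 1" then show ?thesis using ab bpos pe by auto
  next
    assume "a = -1" then show ?thesis using ab bpos pe by auto
  qed
  have "p \<ge> 2" using p(1) by (rule prime_ge_2_nat)
  moreover have "p \<noteq> 2" using p(2) by auto
  ultimately have p2: "(2::nat) < p" by simp
  have na: "\<not> int p dvd a" using a1 p2 by auto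
  have nb: "\<not> int p dvd b"
  proof
    assume "int p dvd b"
    then have "int p dvd 2^e" using b2 by simp
    then have "int p dvd int (2^e)" by simp
    then have "p dvd 2^e" by (simp only: int_dvd_int_iff)
    then have "p dvd 2" using p(1) prime_dvd_power by blast
    then show False using p2 by (simp add: nat_dvd_not_less)
  qed
  show ?thesis unfolding padic_unit_def q using na nb by simp
qed

theorem lemma4p5:
  fixes k p :: nat
  assumes "k > 0" and "prime p" and "odd p" and "p > k"
  shows "padic_unit p (Pk k 4)"
proof -
  have "Pk k 4 = det (AM k)" by (simp add: Pk_def AM_def)
  then obtain e where "Pk k 4 = 1/2^e \<or> Pk k 4 = -(1/2^e)" using det_AM by metis
  then show ?thesis using unit_of_pow2 assms(2,3) by blast
qed

end
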